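(* Let $\rho\in\mathcal U_T$ satisfy $\limsup_{T\to\infty}\frac{\mu(T-\eta,\rho)}{\mu(T,\rho)}>0$ for every $\eta\ge0$. Let $f=g+h\in WPAAS^2(\mathbb R,L^2(P,H),\rho)$ with $g\in AS^2(\mathbb R,L^2(P,H))$ and $h^b\in SPAA_0(\mathbb R,L^2((0,1),L^2(P,H)),\rho)$. Then $\{g(t+\cdot):t\in\mathbb R\}\subset\overline{\{f(t+\cdot):t\in\mathbb R\}}$, where $g(t+\cdot),f(t+\cdot)$ are regarded as elements of $L^2((0,1),L^2(P,H))$ and the closure is taken in that space.
   Context: $H$ is a separable real Hilbert space, $(\Omega,\mathcal F,P)$ a complete probability space, and $L^2(P,H)$ the Banach space of $H$-valued random variables $x$ with $\mathbb E\|x\|^2<\infty$, normed by $\|x\|_2=(\mathbb E\|x\|^2)^{1/2}$. $\mathcal U$ is the set of positive locally integrable functions on $\mathbb R$; for $\rho\in\mathcal U$, $T>0$, $\mu(T,\rho)=\int_{-T}^T\rho(t)\,dt$; $\mathcal U_\infty=\{\rho\in\mathcal U:\lim_{T\to\infty}\mu(T,\rho)=\infty\}$; $\mathcal U_b=\{\rho\in\mathcal U_\infty:\rho$ bounded and $\inf_t\rho(t)>0\}$. For $\rho_1,\rho_2\in\mathcal U_\infty$, $\rho_1\sim\rho_2$ means $\rho_1/\rho_2\in\mathcal U_b$. For $s\in\mathbb R$, $\rho_s(t)=\rho(t+s)$, and $\mathcal U_T=\{\rho\in\mathcal U_\infty:\rho\sim\rho_s$ for all $s\in\mathbb R\}$.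 $BS^2(L^2(P,H))$ is the space of processes $x\in L^2_{loc}(\mathbb R,L^2(P,H))$ with $\|x\|_{S^2}=\sup_{t\in\mathbb R}(\int_t^{t+1}\mathbb E\|x(\tau)\|^2d\tau)^{1/2}<\infty$. A process $x\in L^2_{loc}(\mathbb R,L^2(P,H))$ is $S^2$-almost automorphic if every real sequence $(s_n')$ has a subsequence $(s_n)$ and $y\in L^2_{loc}(\mathbb R,L^2(P,H))$ with $\int_t^{t+1}\mathbb E\|x(s+s_n)-y(s)\|^2ds\to0$ and $\int_t^{t+1}\mathbb E\|y(s-s_n)-x(s)\|^2ds\to0$ for each $t\in\mathbb R$; the set is $AS^2(\mathbb R,L^2(P,H))$. $WPAAS^2(\mathbb R,L^2(P,H),\rho)$ ($S^2$-weighted pseudo almost automorphic processes) is the set of $f\in BS^2(L^2(P,H))$ of the form $f=g+h$ with $g\in AS^2(\mathbb R,L^2(P,H))$ and $h$ satisfying $\lim_{T\to\infty}\frac{1}{\mu(T,\rho)}\int_{-T}^T(\int_t^{t+1}\mathbb E\|h(s)\|^2ds)^{1/2}\rho(t)\,dt=0$ (written $h^b\in SPAA_0(\mathbb R,L^2((0,1),L^2(P,H)),\rho)$, where $h^b(t,s)=h(t+s)$ is the Bochner transform). *)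

theory Defs
  imports "HOL-Probability.Probability"
begin

definition mu :: "real \<Rightarrow> (real \<Rightarrow> real) \<Rightarrow> real" where
  "mu T \<rho> = (LINT t:{-T..T}|lborel. \<rho> t)"

definition U_set :: "(real \<Rightarrow> real) set" where
  "U_set = {\<rho>. (\<forall>t. 0 < \<rho> t) \<and> (\<forall>a b. set_integrable lborel {a..b} \<rho>)}"

definition U_inf :: "(real \<Rightarrow> real) set" where
  "U_inf = {\<rho>. \<rho> \<in> U_set \<and> filterlim (\<lambda>T. mu T \<rho>) at_top at_top}"

definition U_b :: "(real \<Rightarrow> real) set" where
  "U_b = {\<rho>. \<rho> \<in> U_inf \<and> bdd_above (range \<rho>) \<and> (INF t. \<rho> t) > 0}"

definition weight_equiv :: "(real \<Rightarrow> real) \<Rightarrow> (real \<Rightarrow> real) \<Rightarrow> bool" where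
  "weight_equiv \<rho>1 \<rho>2 \<longleftrightarrow> \<rho>1 \<in> U_inf \<and> \<rho>2 \<in> U_inf \<and> (\<lambda>t. \<rho>1 t / \<rho>2 t) \<in> U_b"

definition U_T :: "(real \<Rightarrow> real) set" where
  "U_T = {\<rho>. \<rho> \<in> U_inf \<and> (\<forall>s. weight_equiv \<rho> (\<lambda>t. \<rho> (t + s)))}"

definition sq_int :: "'w measure \<Rightarrow> (real \<Rightarrow> 'w \<Rightarrow> 'h::real_normed_vector) \<Rightarrow> real \<Rightarrow> real \<Rightarrow> ennreal" where
  "sq_int M x a b = (\<integral>\<^sup>+ s\<in>{a..b}. (\<integral>\<^sup>+ \<omega>. ennreal ((norm (x s \<omega>))\<^sup>2) \<partial>M) \<partial>lborel)"

definition L2loc :: "'w measure \<Rightarrow> (real \<Rightarrow> 'w \<Rightarrow> 'h::real_normed_vector) \<Rightarrow> bool" where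
  "L2loc M x \<longleftrightarrow> (\<lambda>(s, \<omega>). x s \<omega>) \<in> borel_measurable (lborel \<Otimes>\<^sub>M M)
      \<and> (\<forall>t. sq_int M x t (t + 1) < \<infinity>)"

definition BS2 :: "'w measure \<Rightarrow> (real \<Rightarrow> 'w \<Rightarrow> 'h::real_normed_vector) \<Rightarrow> bool" where
  "BS2 M x \<longleftrightarrow> L2loc M x \<and> (\<exists>B::real. \<forall>t. sq_int M x t (t + 1) \<le> ennreal B)"

definition AS2 :: "'w measure \<Rightarrow> (real \<Rightarrow> 'w \<Rightarrow> 'h::real_normed_vector) \<Rightarrow> bool" where
  "AS2 M x \<longleftrightarrow> L2loc M x \<and>
    (\<forall>s' :: nat \<Rightarrow> real. \<exists>r :: nat \<Rightarrow> nat. \<exists>y. strict_mono r \<and> L2loc M y \<and>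
       (\<forall>t. ((\<lambda>n. sq_int M (\<lambda>s \<omega>. x (s + s' (r n)) \<omega> - y s \<omega>) t (t + 1)) \<longlongrightarrow> 0) sequentially) \<and>
       (\<forall>t. ((\<lambda>n. sq_int M (\<lambda>s \<omega>. y (s - s' (r n)) \<omega> - x s \<omega>) t (t + 1)) \<longlongrightarrow> 0) sequentially))"

text \<open>Ergodic (weighted mean zero) condition on h, i.e. h^b in SPAA_0(rho).\<close>
definition SPAA0 :: "'w measure \<Rightarrow> (real \<Rightarrow> real) \<Rightarrow> (real \<Rightarrow> 'w \<Rightarrow> 'h::real_normed_vector) \<Rightarrow> bool" where
  "SPAA0 M \<rho> h \<longleftrightarrow>
    ((\<lambda>T. (\<integral>\<^sup>+ t\<in>{-T..T}. ennreal (sqrt (enn2real (sq_int M h t (t + 1))) * \<rho> t) \<partial>lborel)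
           / ennreal (mu T \<rho>)) \<longlongrightarrow> 0) at_top"

definition WPAAS2 :: "'w measure \<Rightarrow> (real \<Rightarrow> real) \<Rightarrow> (real \<Rightarrow> 'w \<Rightarrow> 'h::real_normed_vector) \<Rightarrow> bool" where
  "WPAAS2 M \<rho> f \<longleftrightarrow> BS2 M f \<and>
     (\<exists>g h. AS2 M g \<and> SPAA0 M \<rho> h \<and> (\<forall>t \<omega>. f t \<omega> = g t \<omega> + h t \<omega>))"

end

theory Submission
  imports Defs
begin

abbreviation jm :: "'w measure \<Rightarrow> (real \<Rightarrow> 'w \<Rightarrow> 'h::real_normed_vector) \<Rightarrow> bool" where
  "jm M x \<equiv> (\<lambda>(s, \<omega>). x s \<omega>) \<in> borel_measurable (lborel \<Otimes>\<^sub>M M)"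

lemma jm_shift:
  assumes "jm M x" shows "jm M (\<lambda>r \<omega>. x (c + r) \<omega>)"
proof -
  have "(\<lambda>(r,\<omega>). (c + r, \<omega>)) \<in> measurable (lborel \<Otimes>\<^sub>M M) (lborel \<Otimes>\<^sub>M M)"
    by (auto intro!: measurable_Pair simp: split_beta')
  from measurable_comp[OF this assms] show ?thesis by (simp add: comp_def split_beta')
qed

lemma jm_diff:
  fixes x y :: "real \<Rightarrow> 'w \<Rightarrow> 'h::{real_normed_vector, second_countable_topology}"
  assumes "jm M x" "jm M y" shows "jm M (\<lambda>r \<omega>. x r \<omega> - y r \<omega>)"
  using borel_measurable_diff[OF assms] by (simp add: split_beta')

lemma jm_inner:
  fixes x :: "real \<Rightarrow> 'w \<Rightarrow> 'h::{real_normed_vector, second_countable_topology}"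
  assumes "sigma_finite_measure M" "jm M x"
  shows "(\<lambda>s. \<integral>\<^sup>+ \<omega>. ennreal ((norm (x s \<omega>))\<^sup>2) \<partial>M) \<in> borel_measurable lborel"
proof -
  interpret sigma_finite_measure M by fact
  have "(\<lambda>(s,\<omega>). ennreal ((norm (x s \<omega>))\<^sup>2)) \<in> borel_measurable (lborel \<Otimes>\<^sub>M M)"
    using assms(2) by measurable
  then show ?thesis using borel_measurable_nn_integral by simp
qed

lemma sq_int_shift:
  fixes x :: "real \<Rightarrow> 'w \<Rightarrow> 'h::{real_normed_vector, second_countable_topology}"
  assumes "sigma_finite_measure M" "jm M x"
  shows "sq_int M (\<lambda>r \<omega>. x (c + r) \<omega>) a b = sq_int M x (c + a) (c + b)"
proof -
  define \<phi> where "\<phi> = (\<lambda>s. \<integral>\<^sup>+ \<omega>. ennreal ((norm (x s \<omega>))\<^sup>2) \<partial>M)"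
  have m: "\<phi> \<in> borel_measurable borel" using jm_inner[OF assms] unfolding \<phi>_def by simp
  have "sq_int M x (c + a) (c + b) = (\<integral>\<^sup>+ s. \<phi> s * indicator {c+a..c+b} s \<partial>lborel)"
    unfolding sq_int_def \<phi>_def by simp
  also have "\<dots> = (\<integral>\<^sup>+ r. \<phi> (c + r) * indicator {c+a..c+b} (c + r) \<partial>lborel)"
    using nn_integral_real_affine[of "\<lambda>s. \<phi> s * indicator {c+a..c+b} s" 1 c] m by simp
  also have "\<dots> = (\<integral>\<^sup>+ r. \<phi> (c + r) * indicator {a..b} r \<partial>lborel)"
    by (intro nn_integral_cong) (auto simp: indicator_def)
  finally show ?thesis unfolding sq_int_def \<phi>_def by simp
qed

lemma sq_int_mono_set:
  assumes "a \<le> a'" "b' \<le> b"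
  shows "sq_int M x a' b' \<le> sq_int M x a b"
  unfolding sq_int_def using assms
  by (intro nn_integral_mono) (auto simp: indicator_def)

lemma sq_int_cong:
  assumes "\<And>s \<omega>. norm (x s \<omega>) = norm (y s \<omega>)"
  shows "sq_int M x a b = sq_int M y a b"
  unfolding sq_int_def using assms by simp

lemma ennreal_tri2:
  fixes a b c :: "'h::real_normed_vector"
  shows "ennreal ((norm (a - c))\<^sup>2) \<le> 2 * ennreal ((norm (a - b))\<^sup>2) + 2 * ennreal ((norm (b - c))\<^sup>2)"
proof -
  have "a - c = (a - b) + (b - c)" by simp
  then have "norm (a - c) \<le> norm (a - b) + norm (b - c)" by (metis norm_triangle_ineq)
  then have "(norm (a - c))\<^sup>2 \<le> (norm (a - b) + norm (b - c))\<^sup>2"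
    by (simp add: power_mono)
  also have "\<dots> \<le> 2 * (norm (a - b))\<^sup>2 + 2 * (norm (b - c))\<^sup>2"
    by (smt (verit) sum_squares_ge_zero power2_sum power2_diff zero_le_power2)
  finally have "ennreal ((norm (a - c))\<^sup>2) \<le> ennreal (2 * (norm (a - b))\<^sup>2 + 2 * (norm (b - c))\<^sup>2)"
    using ennreal_leI by blast
  also have "\<dots> = 2 * ennreal ((norm (a - b))\<^sup>2) + 2 * ennreal ((norm (b - c))\<^sup>2)"
    by (simp add: ennreal_plus ennreal_mult)
  finally show ?thesis .
qed

lemma sq_int_tri:
  fixes x y z :: "real \<Rightarrow> 'w \<Rightarrow> 'h::{real_normed_vector, second_countable_topology}"
  assumes "sigma_finite_measure M" "jm M x" "jm M y" "jm M z"
  shows "sq_int M (\<lambda>s \<omega>. x s \<omega> - z s \<omega>) a b \<le>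
     2 * sq_int M (\<lambda>s \<omega>. x s \<omega> - y s \<omega>) a b + 2 * sq_int M (\<lambda>s \<omega>. y s \<omega> - z s \<omega>) a b"
proof -
  have mxy: "jm M (\<lambda>s \<omega>. x s \<omega> - y s \<omega>)" and myz: "jm M (\<lambda>s \<omega>. y s \<omega> - z s \<omega>)"
    using assms by (auto intro: jm_diff)
  have inner: "\<And>s. (\<integral>\<^sup>+ \<omega>. ennreal ((norm (x s \<omega> - z s \<omega>))\<^sup>2) \<partial>M) \<le>
      2 * (\<integral>\<^sup>+ \<omega>. ennreal ((norm (x s \<omega> - y s \<omega>))\<^sup>2) \<partial>M) + 2 * (\<integral>\<^sup>+ \<omega>. ennreal ((norm (y s \<omega> - z s \<omega>))\<^sup>2) \<partial>M)"
  proof -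
    fix s
    have m1: "(\<lambda>\<omega>. ennreal ((norm (x s \<omega> - y s \<omega>))\<^sup>2)) \<in> borel_measurable M"
      using measurable_Pair2[OF mxy, of s] by simp
    have m2: "(\<lambda>\<omega>. ennreal ((norm (y s \<omega> - z s \<omega>))\<^sup>2)) \<in> borel_measurable M"
      using measurable_Pair2[OF myz, of s] by simp
    have "(\<integral>\<^sup>+ \<omega>. ennreal ((norm (x s \<omega> - z s \<omega>))\<^sup>2) \<partial>M) \<le>
       (\<integral>\<^sup>+ \<omega>. 2 * ennreal ((norm (x s \<omega> - y s \<omega>))\<^sup>2) + 2 * ennreal ((norm (y s \<omega> - z s \<omega>))\<^sup>2) \<partial>M)"
      by (intro nn_integral_mono ennreal_tri2)
    also have "\<dots> = 2 * (\<integral>\<^sup>+ \<omega>. ennreal ((norm (x s \<omega> - y s \<omega>))\<^sup>2) \<partial>M) + 2 * (\<integral>\<^sup>+ \<omega>. ennreal ((norm (y s \<omega> - z s \<omega>))\<^sup>2) \<partial>M)"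
      using m1 m2 by (simp add: nn_integral_add nn_integral_cmult)
    finally show "?thesis s" .
  qed
  have i1: "(\<lambda>s. \<integral>\<^sup>+ \<omega>. ennreal ((norm (x s \<omega> - y s \<omega>))\<^sup>2) \<partial>M) \<in> borel_measurable lborel"
    using jm_inner[OF assms(1) mxy] by simp
  have i2: "(\<lambda>s. \<integral>\<^sup>+ \<omega>. ennreal ((norm (y s \<omega> - z s \<omega>))\<^sup>2) \<partial>M) \<in> borel_measurable lborel"
    using jm_inner[OF assms(1) myz] by simp
  have "sq_int M (\<lambda>s \<omega>. x s \<omega> - z s \<omega>) a b \<le> (\<integral>\<^sup>+ s. (2 * (\<integral>\<^sup>+ \<omega>. ennreal ((norm (x s \<omega> - y s \<omega>))\<^sup>2) \<partial>M)
       + 2 * (\<integral>\<^sup>+ \<omega>. ennreal ((norm (y s \<omega> - z s \<omega>))\<^sup>2) \<partial>M)) * indicator {a..b} s \<partial>lborel)"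
    unfolding sq_int_def by (intro nn_integral_mono mult_right_mono inner) simp
  also have "\<dots> = (\<integral>\<^sup>+ s. 2 * ((\<integral>\<^sup>+ \<omega>. ennreal ((norm (x s \<omega> - y s \<omega>))\<^sup>2) \<partial>M) * indicator {a..b} s)
       + 2 * ((\<integral>\<^sup>+ \<omega>. ennreal ((norm (y s \<omega> - z s \<omega>))\<^sup>2) \<partial>M) * indicator {a..b} s) \<partial>lborel)"
    by (intro nn_integral_cong) (simp add: distrib_right mult.assoc)
  also have "\<dots> = 2 * sq_int M (\<lambda>s \<omega>. x s \<omega> - y s \<omega>) a b + 2 * sq_int M (\<lambda>s \<omega>. y s \<omega> - z s \<omega>) a b"
    unfolding sq_int_def using i1 i2 by (simp add: nn_integral_add nn_integral_cmult)
  finally show ?thesis .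
qed

lemma sq_int_split:
  fixes x :: "real \<Rightarrow> 'w \<Rightarrow> 'h::{real_normed_vector, second_countable_topology}"
  assumes "sigma_finite_measure M" "jm M x"
  shows "sq_int M x a c \<le> sq_int M x a b + sq_int M x b c"
proof -
  have i: "(\<lambda>s. \<integral>\<^sup>+ \<omega>. ennreal ((norm (x s \<omega>))\<^sup>2) \<partial>M) \<in> borel_measurable lborel"
    using jm_inner[OF assms] .
  have "sq_int M x a c \<le> (\<integral>\<^sup>+ s. (\<integral>\<^sup>+ \<omega>. ennreal ((norm (x s \<omega>))\<^sup>2) \<partial>M) * indicator {a..b} s
      + (\<integral>\<^sup>+ \<omega>. ennreal ((norm (x s \<omega>))\<^sup>2) \<partial>M) * indicator {b..c} s \<partial>lborel)"
    unfolding sq_int_def by (intro nn_integral_mono) (auto simp: indicator_def)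
  also have "\<dots> = sq_int M x a b + sq_int M x b c"
    unfolding sq_int_def using i by (simp add: nn_integral_add)
  finally show ?thesis .
qed

lemma jm_shift_r:
  assumes "jm M x" shows "jm M (\<lambda>r \<omega>. x (r + c) \<omega>)"
  using jm_shift[OF assms, of c] by (simp add: add.commute)

lemma jm_shift_m:
  assumes "jm M x" shows "jm M (\<lambda>r \<omega>. x (r - c) \<omega>)"
  using jm_shift[OF assms, of "-c"] by simp

lemma ennreal_lessE:
  assumes "A < ennreal x" obtains a where "A = ennreal a" "0 \<le> a" "a < x"
proof -
  have "A \<noteq> top" using assms by auto
  then obtain a where "A = ennreal a" "0 \<le> a" by (cases A) auto
  with assms that show ?thesis by (auto simp: ennreal_less_iff)
qed

lemma ennreal_small4:
  fixes A B :: ennreal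
  assumes "A < ennreal (\<delta>/4)" "B < ennreal (\<delta>/4)"
  shows "2 * A + 2 * B < ennreal \<delta>"
proof -
  obtain a where a: "A = ennreal a" "0 \<le> a" "a < \<delta>/4" using assms(1) by (rule ennreal_lessE)
  obtain b where b: "B = ennreal b" "0 \<le> b" "b < \<delta>/4" using assms(2) by (rule ennreal_lessE)
  have "2 * A + 2 * B = ennreal (2 * a + 2 * b)" using a b by (simp add: ennreal_plus ennreal_mult)
  also have "\<dots> < ennreal \<delta>" using a b by (subst ennreal_less_iff) auto
  finally show ?thesis .
qed

lemma reldense:
  fixes g :: "real \<Rightarrow> 'w \<Rightarrow> 'h::{real_normed_vector, second_countable_topology}"
  assumes sf: "sigma_finite_measure M" and AA: "AS2 M g" and dpos: "0 < \<delta>"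
  shows "\<exists>L. \<forall>a. \<exists>\<tau>. \<bar>\<tau> - a\<bar> \<le> L \<and> sq_int M (\<lambda>r \<omega>. g (s+r) \<omega> - g (\<tau>+r) \<omega>) 0 1 < ennreal \<delta>"
proof (rule ccontr)
  define D where "D = (\<lambda>\<tau>. sq_int M (\<lambda>r \<omega>. g (s+r) \<omega> - g (\<tau>+r) \<omega>) 0 1)"
  assume "\<not> ?thesis"
  then have "\<forall>L. \<exists>a. \<forall>\<tau>. \<bar>\<tau> - a\<bar> \<le> L \<longrightarrow> ennreal \<delta> \<le> D \<tau>"
    unfolding D_def by (auto simp: not_less)
  then have "\<forall>n::nat. \<exists>a. \<forall>\<tau>. \<bar>\<tau> - a\<bar> \<le> real n \<longrightarrow> ennreal \<delta> \<le> D \<tau>" by blast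
  then obtain a where a0: "\<forall>n::nat. \<forall>\<tau>. \<bar>\<tau> - a n\<bar> \<le> real n \<longrightarrow> ennreal \<delta> \<le> D \<tau>"
    using choice[of "\<lambda>n a. \<forall>\<tau>. \<bar>\<tau> - a\<bar> \<le> real n \<longrightarrow> ennreal \<delta> \<le> D \<tau>"] by blast
  have a: "\<And>n \<tau>. \<bar>\<tau> - a n\<bar> \<le> real n \<Longrightarrow> ennreal \<delta> \<le> D \<tau>" using a0 by blast
  have gm: "jm M g" using AA unfolding AS2_def L2loc_def by auto
  from AA obtain q y where q: "strict_mono q" and yL: "L2loc M y"
    and c1: "\<forall>t. ((\<lambda>n. sq_int M (\<lambda>s \<omega>. g (s + a (q n)) \<omega> - y s \<omega>) t (t + 1)) \<longlongrightarrow> 0) sequentially"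
    and c2: "\<forall>t. ((\<lambda>n. sq_int M (\<lambda>s \<omega>. y (s - a (q n)) \<omega> - g s \<omega>) t (t + 1)) \<longlongrightarrow> 0) sequentially"
    unfolding AS2_def by blast
  have ym: "jm M y" using yL unfolding L2loc_def by auto
  have d4: "0 < ennreal (\<delta>/4)" using dpos by simp
  have "\<forall>\<^sub>F n in sequentially. sq_int M (\<lambda>u \<omega>. y (u - a (q n)) \<omega> - g u \<omega>) s (s + 1) < ennreal (\<delta>/4)"
    using order_tendstoD(2)[OF c2[rule_format, of s] d4] .
  then obtain n where n: "sq_int M (\<lambda>u \<omega>. y (u - a (q n)) \<omega> - g u \<omega>) s (s + 1) < ennreal (\<delta>/4)"
    by (auto simp: eventually_sequentially)
  define c where "c = s - a (q n)"
  have "\<forall>\<^sub>F m in sequentially. sq_int M (\<lambda>u \<omega>. g (u + a (q m)) \<omega> - y u \<omega>) c (c + 1) < ennreal (\<delta>/4)"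
    using order_tendstoD(2)[OF c1[rule_format, of c] d4] .
  moreover have "\<forall>\<^sub>F m in sequentially. nat \<lceil>\<bar>c\<bar>\<rceil> \<le> m" by (rule eventually_ge_at_top)
  ultimately have "\<forall>\<^sub>F m in sequentially. sq_int M (\<lambda>u \<omega>. g (u + a (q m)) \<omega> - y u \<omega>) c (c + 1) < ennreal (\<delta>/4)
      \<and> nat \<lceil>\<bar>c\<bar>\<rceil> \<le> m" by (rule eventually_conj)
  then obtain m where m1: "sq_int M (\<lambda>u \<omega>. g (u + a (q m)) \<omega> - y u \<omega>) c (c + 1) < ennreal (\<delta>/4)"
    and m2: "nat \<lceil>\<bar>c\<bar>\<rceil> \<le> m"
    by (auto simp: eventually_sequentially)
  define \<tau> where "\<tau> = c + a (q m)"
  have "\<bar>\<tau> - a (q m)\<bar> \<le> real (q m)"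
  proof -
    have "\<bar>c\<bar> \<le> real m" using m2 by linarith
    moreover have "m \<le> q m" using seq_suble[OF q] .
    ultimately show ?thesis unfolding \<tau>_def by simp
  qed
  then have big: "ennreal \<delta> \<le> D \<tau>" by (rule a)
  have xm: "jm M (\<lambda>r \<omega>. g (s + r) \<omega>)" by (rule jm_shift[OF gm])
  have ym': "jm M (\<lambda>r \<omega>. y (c + r) \<omega>)" by (rule jm_shift[OF ym])
  have zm: "jm M (\<lambda>r \<omega>. g (\<tau> + r) \<omega>)" by (rule jm_shift[OF gm])
  have "D \<tau> \<le> 2 * sq_int M (\<lambda>r \<omega>. g (s + r) \<omega> - y (c + r) \<omega>) 0 1
          + 2 * sq_int M (\<lambda>r \<omega>. y (c + r) \<omega> - g (\<tau> + r) \<omega>) 0 1"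
    unfolding D_def using sq_int_tri[OF sf xm ym' zm] by simp
  also have "sq_int M (\<lambda>r \<omega>. g (s + r) \<omega> - y (c + r) \<omega>) 0 1
      = sq_int M (\<lambda>r \<omega>. (\<lambda>u \<omega>. y (u - a (q n)) \<omega> - g u \<omega>) (s + r) \<omega>) 0 1"
    by (rule sq_int_cong) (simp add: norm_minus_commute c_def algebra_simps)
  also have "\<dots> = sq_int M (\<lambda>u \<omega>. y (u - a (q n)) \<omega> - g u \<omega>) s (s + 1)"
    by (subst sq_int_shift[OF sf]) (auto intro!: jm_diff jm_shift_m ym gm)
  also have "sq_int M (\<lambda>r \<omega>. y (c + r) \<omega> - g (\<tau> + r) \<omega>) 0 1
      = sq_int M (\<lambda>r \<omega>. (\<lambda>u \<omega>. g (u + a (q m)) \<omega> - y u \<omega>) (c + r) \<omega>) 0 1"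
    by (rule sq_int_cong) (simp add: norm_minus_commute \<tau>_def algebra_simps)
  also have "\<dots> = sq_int M (\<lambda>u \<omega>. g (u + a (q m)) \<omega> - y u \<omega>) c (c + 1)"
    by (subst sq_int_shift[OF sf]) (auto intro!: jm_diff jm_shift_r ym gm)
  finally have "D \<tau> < ennreal \<delta>" using ennreal_small4[OF n m1]
    by (meson order_le_less_trans)
  with big show False by simp
qed

lemma UT_props:
  assumes "\<rho> \<in> U_T"
  shows "\<forall>t. 0 < \<rho> t" "\<forall>a b. set_integrable lborel {a..b} \<rho>"
    "filterlim (\<lambda>T. mu T \<rho>) at_top at_top" "\<forall>u. weight_equiv \<rho> (\<lambda>t. \<rho> (t + u))"
  using assms unfolding U_T_def U_inf_def U_set_def by auto

lemma rho_meas: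
  assumes "\<rho> \<in> U_T" shows "\<rho> \<in> borel_measurable borel"
proof (rule borel_measurable_LIMSEQ_real)
  show "(\<lambda>n. indicator {- real n..real n} x *\<^sub>R \<rho> x) \<longlonglongrightarrow> \<rho> x" for x
  proof (rule tendsto_eventually)
    have "\<forall>\<^sub>F n in sequentially. nat \<lceil>\<bar>x\<bar>\<rceil> \<le> n" by (rule eventually_ge_at_top)
    then show "\<forall>\<^sub>F n in sequentially. indicator {- real n..real n} x *\<^sub>R \<rho> x = \<rho> x"
      by eventually_elim (auto simp: indicator_def)
  qed
  show "(\<lambda>x. indicator {- real n..real n} x *\<^sub>R \<rho> x) \<in> borel_measurable borel" for n
  proof -
    have "integrable lborel (\<lambda>x. indicator {- real n..real n} x *\<^sub>R \<rho> x)"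
      using UT_props(2)[OF assms] unfolding set_integrable_def by blast
    then have "(\<lambda>x. indicator {- real n..real n} x *\<^sub>R \<rho> x) \<in> borel_measurable lborel"
      by (rule borel_measurable_integrable)
    then show ?thesis by simp
  qed
qed

lemma mu_nn:
  assumes "\<rho> \<in> U_T"
  shows "ennreal (mu X \<rho>) = (\<integral>\<^sup>+ t. ennreal (\<rho> t) * indicator {-X..X} t \<partial>lborel)"
proof -
  have i: "integrable lborel (\<lambda>t. indicator {-X..X} t *\<^sub>R \<rho> t)"
    using UT_props(2)[OF assms] unfolding set_integrable_def by auto
  have p: "\<And>t. 0 \<le> \<rho> t" using UT_props(1)[OF assms] less_imp_le by blast
  have 1: "(\<integral>\<^sup>+ t. ennreal (indicator {-X..X} t *\<^sub>R \<rho> t) \<partial>lborel) = ennreal (mu X \<rho>)"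
    unfolding mu_def set_lebesgue_integral_def
    by (rule nn_integral_eq_integral[OF i]) (auto simp: p)
  have eq: "(\<lambda>t. ennreal (indicator {-X..X} t *\<^sub>R \<rho> t)) = (\<lambda>t. ennreal (\<rho> t) * indicator {-X..X} t)"
    by (auto simp: indicator_def)
  show ?thesis using 1 unfolding eq by (rule sym)
qed

lemma mu_nonneg:
  assumes "\<rho> \<in> U_T" shows "0 \<le> mu X \<rho>"
  using UT_props(1)[OF assms] unfolding mu_def set_lebesgue_integral_def
  by (intro integral_nonneg_AE) (auto simp: indicator_def less_imp_le)

lemma wshift:
  assumes "\<rho> \<in> U_T" shows "\<exists>m>0. \<forall>t. \<rho> (t + u) \<le> \<rho> t / m"
proof -
  have pos: "\<And>t. 0 < \<rho> t" using UT_props(1)[OF assms] by blast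
  have "(\<lambda>t. \<rho> t / \<rho> (t + u)) \<in> U_b" using UT_props(4)[OF assms] unfolding weight_equiv_def by blast
  then have m: "(INF t. \<rho> t / \<rho> (t + u)) > 0" unfolding U_b_def by blast
  have bb: "bdd_below (range (\<lambda>t. \<rho> t / \<rho> (t + u)))"
    by (rule bdd_belowI[of _ 0]) (auto simp: pos less_imp_le)
  show ?thesis
  proof (intro exI conjI allI)
    fix t
    have "(INF t. \<rho> t / \<rho> (t + u)) \<le> \<rho> t / \<rho> (t + u)" by (rule cINF_lower[OF bb]) simp
    then have "(INF t. \<rho> t / \<rho> (t + u)) * \<rho> (t + u) \<le> \<rho> t"
      using pos[of "t+u"] by (simp add: pos_le_divide_eq)
    then show "\<rho> (t + u) \<le> \<rho> t / (INF t. \<rho> t / \<rho> (t + u))"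
      using m by (simp add: pos_le_divide_eq mult.commute)
  qed (rule m)
qed

lemma wshiftK:
  assumes "\<rho> \<in> U_T" shows "\<exists>C>0. \<forall>j\<in>{-int K..int K}. \<forall>t. \<rho> (t + real_of_int j / 2) \<le> C * \<rho> t"
proof -
  from wshift[OF assms] have "\<forall>u. \<exists>m>0. \<forall>t. \<rho> (t + u) \<le> \<rho> t / m" by blast
  then obtain mm where mm: "\<And>u. mm u > 0" "\<And>u t. \<rho> (t + u) \<le> \<rho> t / mm u" by metis
  define C where "C = 1 + (\<Sum>j\<in>{-int K..int K}. 1 / mm (real_of_int j / 2))"
  have pos: "\<And>t. 0 < \<rho> t" using UT_props(1)[OF assms] by blast
  have Cj: "1 / mm (real_of_int j / 2) \<le> C" if "j \<in> {-int K..int K}" for j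
  proof -
    have "1 / mm (real_of_int j / 2) \<le> (\<Sum>j\<in>{-int K..int K}. 1 / mm (real_of_int j / 2))"
      by (rule member_le_sum) (use that mm(1) in \<open>auto intro: less_imp_le\<close>)
    then show ?thesis unfolding C_def by simp
  qed
  have "0 \<le> (\<Sum>j\<in>{-int K..int K}. 1 / mm (real_of_int j / 2))"
    by (intro sum_nonneg) (use mm(1) in \<open>auto intro: less_imp_le\<close>)
  then have "C > 0" unfolding C_def by simp
  moreover have "\<rho> (t + real_of_int j / 2) \<le> C * \<rho> t" if "j \<in> {-int K..int K}" for j t
  proof -
    have "\<rho> (t + real_of_int j / 2) \<le> \<rho> t / mm (real_of_int j / 2)" by (rule mm(2))
    also have "\<dots> = (1 / mm (real_of_int j / 2)) * \<rho> t" by simp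
    also have "\<dots> \<le> C * \<rho> t" by (rule mult_right_mono[OF Cj[OF that]]) (use pos in \<open>auto intro: less_imp_le\<close>)
    finally show ?thesis .
  qed
  ultimately show ?thesis by blast
qed

lemma block:
  assumes UT: "\<rho> \<in> U_T" and Cpos: "C > 0"
    and Cb: "\<forall>j\<in>{-int K..int K}. \<forall>t. \<rho> (t + real_of_int j / 2) \<le> C * \<rho> t"
    and b: "A \<le> b" "b \<le> A + P" and K: "2 * P + 1 \<le> real K"
  shows "(\<integral>\<^sup>+ t. ennreal (\<rho> t) * indicator {A..A+P} t \<partial>lborel)
      \<le> ennreal ((2 * real K + 1) * C) * (\<integral>\<^sup>+ t. ennreal (\<rho> t) * indicator {b..b+1/2} t \<partial>lborel)"
proof -
  define J where "J = (\<lambda>j::int. {b + real_of_int j / 2 .. b + real_of_int j / 2 + 1/2})"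
  define Y where "Y = (\<integral>\<^sup>+ t. ennreal (\<rho> t) * indicator {b..b+1/2} t \<partial>lborel)"
  have rm: "\<rho> \<in> borel_measurable borel" by (rule rho_meas[OF UT])
  have pos: "\<And>t. 0 < \<rho> t" using UT_props(1)[OF UT] by blast
  have ind: "indicator {A..A+P} t \<le> (\<Sum>j\<in>{-int K..int K}. (indicator (J j) t :: ennreal))" for t
  proof (cases "t \<in> {A..A+P}")
    case True
    define j0 where "j0 = \<lfloor>2 * (t - b)\<rfloor>"
    have "j0 \<in> {-int K..int K}" using True b K unfolding j0_def by (auto; linarith)
    moreover have "t \<in> J j0" unfolding J_def j0_def by (auto; linarith)
    ultimately have "(indicator (J j0) t :: ennreal) \<le> (\<Sum>j\<in>{-int K..int K}. (indicator (J j) t :: ennreal))"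
      by (intro member_le_sum) auto
    then show ?thesis using \<open>t \<in> J j0\<close> True by simp
  qed simp
  have "(\<integral>\<^sup>+ t. ennreal (\<rho> t) * indicator {A..A+P} t \<partial>lborel)
      \<le> (\<integral>\<^sup>+ t. (\<Sum>j\<in>{-int K..int K}. ennreal (\<rho> t) * indicator (J j) t) \<partial>lborel)"
    by (intro nn_integral_mono) (simp add: sum_distrib_left[symmetric] mult_left_mono ind)
  also have "\<dots> = (\<Sum>j\<in>{-int K..int K}. \<integral>\<^sup>+ t. ennreal (\<rho> t) * indicator (J j) t \<partial>lborel)"
    by (rule nn_integral_sum) (use rm in \<open>auto simp: J_def\<close>)
  also have "\<dots> \<le> (\<Sum>j\<in>{-int K..int K}. ennreal C * Y)"
  proof (rule sum_mono)
    fix j assume j: "j \<in> {-int K..int K}"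
    have "(\<integral>\<^sup>+ t. ennreal (\<rho> t) * indicator (J j) t \<partial>lborel)
       = (\<integral>\<^sup>+ t. ennreal (\<rho> (real_of_int j / 2 + 1 * t)) * indicator (J j) (real_of_int j / 2 + 1 * t) \<partial>lborel)"
      using nn_integral_real_affine[of "\<lambda>t. ennreal (\<rho> t) * indicator (J j) t" 1 "real_of_int j / 2"] rm
      by (simp add: J_def)
    also have "\<dots> = (\<integral>\<^sup>+ t. ennreal (\<rho> (t + real_of_int j / 2)) * indicator {b..b+1/2} t \<partial>lborel)"
      by (intro nn_integral_cong) (auto simp: J_def indicator_def add.commute)
    also have "\<dots> \<le> (\<integral>\<^sup>+ t. ennreal C * (ennreal (\<rho> t) * indicator {b..b+1/2} t) \<partial>lborel)"
    proof (intro nn_integral_mono)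
      fix t
      have "ennreal (\<rho> (t + real_of_int j / 2)) \<le> ennreal C * ennreal (\<rho> t)"
        using Cb j Cpos pos[of t] by (simp add: ennreal_mult[symmetric] ennreal_leI)
      then show "ennreal (\<rho> (t + real_of_int j / 2)) * indicator {b..b+1/2} t \<le> ennreal C * (ennreal (\<rho> t) * indicator {b..b+1/2} t)"
        by (auto simp: indicator_def)
    qed
    also have "\<dots> = ennreal C * Y" unfolding Y_def using rm by (simp add: nn_integral_cmult)
    finally show "(\<integral>\<^sup>+ t. ennreal (\<rho> t) * indicator (J j) t \<partial>lborel) \<le> ennreal C * Y" .
  qed
  also have "\<dots> = ennreal ((2 * real K + 1) * C) * Y"
  proof -
    have "card {-int K..int K} = 2 * K + 1" by simp
    then have "(\<Sum>j\<in>{-int K..int K}. ennreal C * Y) = of_nat (2 * K + 1) * (ennreal C * Y)" by simp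
    also have "\<dots> = ennreal ((2 * real K + 1) * C) * Y"
      using Cpos by (simp add: ennreal_mult ennreal_of_nat_eq_real_of_nat mult.assoc add.commute)
    finally show ?thesis .
  qed
  finally show ?thesis unfolding Y_def .
qed

lemma weight_main:
  assumes UT: "\<rho> \<in> U_T" and Ppos: "P > 0" and bpos: "\<beta> > 0"
    and good: "\<And>k::int. \<exists>b. real_of_int k * P \<le> b \<and> b + 1/2 \<le> (real_of_int k + 1) * P \<and> (\<forall>t\<in>{b..b+1/2}. S t)"
    and G: "\<And>t. S t \<Longrightarrow> ennreal (\<beta> * \<rho> t) \<le> G t"
  shows "\<exists>\<kappa>>0. \<forall>T\<ge>P. ennreal (\<kappa> * mu (T - P) \<rho>) \<le> (\<integral>\<^sup>+ t. G t * indicator {-T..T} t \<partial>lborel)"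
proof -
  obtain bb where bb: "\<And>k. real_of_int k * P \<le> bb k" "\<And>k. bb k + 1/2 \<le> (real_of_int k + 1) * P"
      "\<And>k t. t \<in> {bb k..bb k + 1/2} \<Longrightarrow> S t"
    using good by metis
  define K where "K = nat \<lceil>2 * P + 1\<rceil>"
  have K: "2 * P + 1 \<le> real K" unfolding K_def by linarith
  obtain C where Cpos: "C > 0" and Cb: "\<forall>j\<in>{-int K..int K}. \<forall>t. \<rho> (t + real_of_int j / 2) \<le> C * \<rho> t"
    using wshiftK[OF UT] by blast
  define C' where "C' = (2 * real K + 1) * C"
  have C'pos: "C' > 0" unfolding C'_def using Cpos by simp
  define \<kappa> where "\<kappa> = \<beta> / (2 * C')"
  have rm: "\<rho> \<in> borel_measurable borel" by (rule rho_meas[OF UT])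
  have pos: "\<And>t. 0 < \<rho> t" using UT_props(1)[OF UT] by blast
  define I where "I = (\<lambda>k. {bb k..bb k + 1/2})"
  show ?thesis
  proof (intro exI conjI allI impI)
    show "\<kappa> > 0" unfolding \<kappa>_def using bpos C'pos by simp
    fix T assume TP: "P \<le> T"
    define KS where "KS = {k::int. - T \<le> real_of_int k * P \<and> (real_of_int k + 1) * P \<le> T}"
    have fin: "finite KS"
    proof (rule finite_subset)
      show "KS \<subseteq> {\<lfloor>(-T)/P\<rfloor> .. \<lceil>T/P\<rceil>}"
      proof
        fix k assume "k \<in> KS"
        then have "- T \<le> real_of_int k * P" "real_of_int k * P \<le> T" unfolding KS_def using Ppos
          by (auto simp: algebra_simps)
        then have "(-T)/P \<le> real_of_int k" "real_of_int k \<le> T/P" using Ppos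
          by (simp_all only: pos_divide_le_eq pos_le_divide_eq)
        then have "\<lfloor>(-T)/P\<rfloor> \<le> k" "k \<le> \<lceil>T/P\<rceil>"
          by (metis floor_mono floor_of_int, metis ceiling_mono ceiling_of_int)
        then show "k \<in> {\<lfloor>(-T)/P\<rfloor> .. \<lceil>T/P\<rceil>}" by simp
      qed
    qed simp
    define X where "X = (\<integral>\<^sup>+ t. ennreal (\<rho> t) * (\<Sum>k\<in>KS. indicator (I k) t) \<partial>lborel)"
    have step1: "ennreal (mu (T - P) \<rho>) \<le> ennreal C' * X"
    proof -
      have "ennreal (mu (T - P) \<rho>) = (\<integral>\<^sup>+ t. ennreal (\<rho> t) * indicator {-(T-P)..T-P} t \<partial>lborel)"
        by (rule mu_nn[OF UT])
      also have "\<dots> \<le> (\<integral>\<^sup>+ t. (\<Sum>k\<in>KS. ennreal (\<rho> t) * indicator {real_of_int k * P..real_of_int k * P + P} t) \<partial>lborel)"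
      proof (intro nn_integral_mono)
        fix t
        show "ennreal (\<rho> t) * indicator {-(T-P)..T-P} t \<le> (\<Sum>k\<in>KS. ennreal (\<rho> t) * indicator {real_of_int k * P..real_of_int k * P + P} t)"
        proof (cases "t \<in> {-(T-P)..T-P}")
          case True
          define k0 where "k0 = \<lfloor>t / P\<rfloor>"
          have l: "real_of_int k0 * P \<le> t" unfolding k0_def by (rule floor_divide_lower[OF Ppos])
          have u: "t < (real_of_int k0 + 1) * P" unfolding k0_def by (rule floor_divide_upper[OF Ppos])
          have k0: "k0 \<in> KS" unfolding KS_def using l u True by (auto simp: algebra_simps)
          have "t \<in> {real_of_int k0 * P..real_of_int k0 * P + P}" using l u by (auto simp: algebra_simps)
          then have "ennreal (\<rho> t) * indicator {-(T-P)..T-P} t = ennreal (\<rho> t) * indicator {real_of_int k0 * P..real_of_int k0 * P + P} t"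
            using True by simp
          also have "\<dots> \<le> (\<Sum>k\<in>KS. ennreal (\<rho> t) * indicator {real_of_int k * P..real_of_int k * P + P} t)"
            by (rule member_le_sum[OF k0]) (auto simp: fin)
          finally show ?thesis .
        qed simp
      qed
      also have "\<dots> = (\<Sum>k\<in>KS. \<integral>\<^sup>+ t. ennreal (\<rho> t) * indicator {real_of_int k * P..real_of_int k * P + P} t \<partial>lborel)"
        by (rule nn_integral_sum) (use rm in auto)
      also have "\<dots> \<le> (\<Sum>k\<in>KS. ennreal C' * (\<integral>\<^sup>+ t. ennreal (\<rho> t) * indicator (I k) t \<partial>lborel))"
      proof (rule sum_mono)
        fix k
        have b1: "real_of_int k * P \<le> bb k" by (rule bb(1))
        have b2: "bb k \<le> real_of_int k * P + P" using bb(2)[of k] by (simp add: algebra_simps)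
        show "(\<integral>\<^sup>+ t. ennreal (\<rho> t) * indicator {real_of_int k * P..real_of_int k * P + P} t \<partial>lborel)
           \<le> ennreal C' * (\<integral>\<^sup>+ t. ennreal (\<rho> t) * indicator (I k) t \<partial>lborel)"
          unfolding C'_def I_def by (rule block[OF UT Cpos Cb b1 b2 K])
      qed
      also have "\<dots> = ennreal C' * X"
      proof -
        have "X = (\<integral>\<^sup>+ t. (\<Sum>k\<in>KS. ennreal (\<rho> t) * indicator (I k) t) \<partial>lborel)"
          unfolding X_def by (simp add: sum_distrib_left)
        also have "\<dots> = (\<Sum>k\<in>KS. \<integral>\<^sup>+ t. ennreal (\<rho> t) * indicator (I k) t \<partial>lborel)"
          by (rule nn_integral_sum) (use rm in \<open>auto simp: I_def\<close>)
        finally show ?thesis by (simp add: sum_distrib_left)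
      qed
      finally show ?thesis .
    qed
    have step4: "ennreal (\<beta>/2) * (ennreal (\<rho> t) * (\<Sum>k\<in>KS. indicator (I k) t)) \<le> G t * indicator {-T..T} t" for t
    proof -
      define W where "W = {k\<in>KS. t \<in> I k}"
      have sumW: "(\<Sum>k\<in>KS. indicator (I k) t :: ennreal) = of_nat (card W)"
      proof -
        have "(\<Sum>k\<in>KS. indicator (I k) t :: ennreal) = (\<Sum>k\<in>KS. if t \<in> I k then 1 else 0)"
          by (intro sum.cong) (auto simp: indicator_def)
        also have "\<dots> = (\<Sum>k\<in>W. 1)" unfolding W_def by (subst sum.inter_filter[OF fin]) simp
        finally show ?thesis by simp
      qed
      show ?thesis
      proof (cases "W = {}")
        case True then show ?thesis using sumW by simp
      next
        case False
        then obtain k0 where k0: "k0 \<in> KS" "t \<in> I k0" unfolding W_def by auto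
        have tT: "t \<in> {-T..T}"
        proof -
          have "- T \<le> real_of_int k0 * P" "(real_of_int k0 + 1) * P \<le> T" using k0(1) unfolding KS_def by auto
          moreover have "bb k0 \<le> t" "t \<le> bb k0 + 1/2" using k0(2) unfolding I_def by auto
          ultimately show ?thesis using bb(1)[of k0] bb(2)[of k0] by simp
        qed
        have St: "S t" using k0(2) bb(3) unfolding I_def by blast
        have "W \<subseteq> {\<lfloor>t/P\<rfloor> - 1, \<lfloor>t/P\<rfloor>}"
        proof
          fix k assume "k \<in> W"
          then have "real_of_int k * P \<le> t" "t \<le> (real_of_int k + 1) * P"
            using bb(1)[of k] bb(2)[of k] unfolding W_def I_def by auto
          then have "real_of_int k \<le> t/P" "t/P \<le> real_of_int k + 1" using Ppos
            by (auto simp: pos_divide_le_eq pos_le_divide_eq)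
          then have "k \<le> \<lfloor>t/P\<rfloor>" "\<lfloor>t/P\<rfloor> \<le> k + 1"
            by (metis floor_mono floor_of_int, metis floor_mono floor_of_int of_int_1 of_int_add)
          then show "k \<in> {\<lfloor>t/P\<rfloor> - 1, \<lfloor>t/P\<rfloor>}" by auto
        qed
        then have "card W \<le> card {\<lfloor>t/P\<rfloor> - 1, \<lfloor>t/P\<rfloor>}" by (intro card_mono) auto
        also have "\<dots> = 2" by simp
        finally have "(of_nat (card W) :: ennreal) \<le> of_nat 2" by (simp only: of_nat_le_iff)
        then have cW: "(of_nat (card W) :: ennreal) \<le> 2" by simp
        have "ennreal (\<beta>/2) * (ennreal (\<rho> t) * (\<Sum>k\<in>KS. indicator (I k) t))
            \<le> ennreal (\<beta>/2) * (ennreal (\<rho> t) * 2)"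
          unfolding sumW by (intro mult_left_mono cW) auto
        also have "\<dots> = ennreal (\<beta> * \<rho> t)"
        proof -
          have "ennreal (\<beta>/2) * (ennreal (\<rho> t) * 2) = ennreal (\<beta>/2) * (ennreal (\<rho> t) * ennreal 2)" by simp
          also have "\<dots> = ennreal (\<beta>/2 * (\<rho> t * 2))" using bpos pos[of t] by (subst ennreal_mult; simp)+
          also have "\<beta>/2 * (\<rho> t * 2) = \<beta> * \<rho> t" by simp
          finally show ?thesis .
        qed
        also have "\<dots> \<le> G t" by (rule G[OF St])
        finally show ?thesis using tT by simp
      qed
    qed
    have step5: "ennreal (\<beta>/2) * X \<le> (\<integral>\<^sup>+ t. G t * indicator {-T..T} t \<partial>lborel)"
    proof -
      have "ennreal (\<beta>/2) * X = (\<integral>\<^sup>+ t. ennreal (\<beta>/2) * (ennreal (\<rho> t) * (\<Sum>k\<in>KS. indicator (I k) t)) \<partial>lborel)"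
        unfolding X_def by (rule nn_integral_cmult[symmetric]) (use rm in \<open>simp add: I_def\<close>)
      also have "\<dots> \<le> (\<integral>\<^sup>+ t. G t * indicator {-T..T} t \<partial>lborel)"
        by (intro nn_integral_mono step4)
      finally show ?thesis .
    qed
    have mnn: "0 \<le> mu (T - P) \<rho>" by (rule mu_nonneg[OF UT])
    have "ennreal (\<kappa> * mu (T - P) \<rho>) = ennreal (1 / C') * ennreal (\<beta>/2) * ennreal (mu (T - P) \<rho>)"
      unfolding \<kappa>_def using mnn bpos C'pos by (simp add: ennreal_mult[symmetric])
    also have "\<dots> \<le> ennreal (1 / C') * ennreal (\<beta>/2) * (ennreal C' * X)"
      by (intro mult_left_mono step1) auto
    also have "\<dots> = (ennreal (1 / C') * ennreal C') * (ennreal (\<beta>/2) * X)" by (simp add: mult_ac)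
    also have "ennreal (1 / C') * ennreal C' = 1" using C'pos by (simp add: ennreal_mult[symmetric])
    finally show "ennreal (\<kappa> * mu (T - P) \<rho>) \<le> (\<integral>\<^sup>+ t. G t * indicator {-T..T} t \<partial>lborel)"
      using step5 by simp
  qed
qed

lemma helper1:
  fixes A B :: ennreal
  assumes "ennreal \<epsilon> \<le> 2 * A + 2 * B" "A < ennreal (\<epsilon>/4)"
  shows "ennreal (\<epsilon>/4) < B"
proof (rule ccontr)
  assume "\<not> ?thesis"
  then have Bl: "B \<le> ennreal (\<epsilon>/4)" by simp
  obtain a where a: "A = ennreal a" "0 \<le> a" "a < \<epsilon>/4" using assms(2) by (rule ennreal_lessE)
  have "B \<noteq> top" using Bl by (auto simp: top_unique)
  then obtain b where b: "B = ennreal b" "0 \<le> b" by (cases B) auto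
  with Bl have "b \<le> \<epsilon>/4" using a by (auto simp: ennreal_le_iff)
  have "2 * A + 2 * B = ennreal (2 * a + 2 * b)" using a b by (simp add: ennreal_plus ennreal_mult)
  also have "\<dots> < ennreal \<epsilon>" using a b \<open>b \<le> \<epsilon>/4\<close> by (subst ennreal_less_iff) auto
  finally show False using assms(1) by simp
qed

lemma helper2:
  fixes A B :: ennreal
  assumes "ennreal x < A + B"
  shows "ennreal (x/2) \<le> A \<or> ennreal (x/2) \<le> B"
proof (rule ccontr)
  assume "\<not> ?thesis"
  then have "A < ennreal (x/2)" "B < ennreal (x/2)" by auto
  then obtain a b where a: "A = ennreal a" "0 \<le> a" "a < x/2" and b: "B = ennreal b" "0 \<le> b" "b < x/2"
    by (meson ennreal_lessE)
  have "A + B = ennreal (a + b)" using a b by (simp add: ennreal_plus)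
  also have "\<dots> \<le> ennreal x" using a b by (intro ennreal_leI) auto
  finally show False using assms by simp
qed

theorem lemma3p3:
  fixes M :: "'w measure"
    and \<rho> :: "real \<Rightarrow> real"
    and f g h :: "real \<Rightarrow> 'w \<Rightarrow> 'h::{real_inner, complete_space, second_countable_topology}"
  assumes "prob_space M"
    and "complete_measure M"
    and "\<rho> \<in> U_T"
    and "\<forall>\<eta>\<ge>0. Limsup at_top (\<lambda>T. ereal (mu (T - \<eta>) \<rho> / mu T \<rho>)) > 0"
    and "WPAAS2 M \<rho> f"
    and "AS2 M g"
    and "SPAA0 M \<rho> h"
    and "\<forall>t \<omega>. f t \<omega> = g t \<omega> + h t \<omega>"
  shows "\<forall>s. \<forall>\<epsilon>>0. \<exists>t. sq_int M (\<lambda>r \<omega>. g (s + r) \<omega> - f (t + r) \<omega>) 0 1 < ennreal \<epsilon>"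
proof (rule ccontr)
  assume "\<not> ?thesis"
  then obtain s \<epsilon> where \<epsilon>pos: "\<epsilon> > 0"
    and H: "\<And>t. ennreal \<epsilon> \<le> sq_int M (\<lambda>r \<omega>. g (s + r) \<omega> - f (t + r) \<omega>) 0 1"
    by (auto simp: not_less)
  have sf: "sigma_finite_measure M" using assms(1) by (rule prob_space_imp_sigma_finite)
  have fL: "L2loc M f" using assms(5) unfolding WPAAS2_def BS2_def by auto
  have gL: "L2loc M g" using assms(6) unfolding AS2_def by auto
  have fm: "jm M f" using fL unfolding L2loc_def by auto
  have gm: "jm M g" using gL unfolding L2loc_def by auto
  have hdef: "h = (\<lambda>t \<omega>. f t \<omega> - g t \<omega>)" using assms(8) by (auto intro!: ext simp: algebra_simps)
  have hm: "jm M h" unfolding hdef by (rule jm_diff[OF fm gm])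
  have hfin: "sq_int M h t (t+1) < \<infinity>" for t
  proof -
    have zm: "jm M (\<lambda>_ _. 0::'h)" by simp
    have "sq_int M h t (t+1) \<le> 2 * sq_int M (\<lambda>s \<omega>. f s \<omega> - 0) t (t+1) + 2 * sq_int M (\<lambda>s \<omega>. 0 - g s \<omega>) t (t+1)"
      unfolding hdef by (rule sq_int_tri[OF sf fm zm gm])
    also have "sq_int M (\<lambda>s \<omega>. f s \<omega> - 0) t (t+1) = sq_int M f t (t+1)" by simp
    also have "sq_int M (\<lambda>s \<omega>. 0 - g s \<omega>) t (t+1) = sq_int M g t (t+1)" by (rule sq_int_cong) simp
    also have "2 * sq_int M f t (t+1) + 2 * sq_int M g t (t+1) < \<infinity>"
      using fL gL unfolding L2loc_def by (simp add: ennreal_mult_less_top)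
    finally show ?thesis .
  qed
  obtain L where L: "\<forall>a. \<exists>\<tau>. \<bar>\<tau> - a\<bar> \<le> L \<and> sq_int M (\<lambda>r \<omega>. g (s+r) \<omega> - g (\<tau>+r) \<omega>) 0 1 < ennreal (\<epsilon>/4)"
    using reldense[OF sf assms(6), of "\<epsilon>/4" s] \<epsilon>pos by auto
  have L0: "0 \<le> L" using L by (meson abs_ge_zero order_trans)
  define c0 where "c0 = \<epsilon>/8"
  have goodb: "\<exists>b. \<bar>b - a\<bar> \<le> L + 1 \<and> (\<forall>t\<in>{b..b+1/2}. ennreal c0 \<le> sq_int M h t (t+1))" for a
  proof -
    obtain \<tau> where \<tau>: "\<bar>\<tau> - a\<bar> \<le> L" and D: "sq_int M (\<lambda>r \<omega>. g (s+r) \<omega> - g (\<tau>+r) \<omega>) 0 1 < ennreal (\<epsilon>/4)"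
      using L by blast
    have "ennreal \<epsilon> \<le> sq_int M (\<lambda>r \<omega>. g (s + r) \<omega> - f (\<tau> + r) \<omega>) 0 1" by (rule H)
    also have "\<dots> \<le> 2 * sq_int M (\<lambda>r \<omega>. g (s+r) \<omega> - g (\<tau>+r) \<omega>) 0 1 + 2 * sq_int M (\<lambda>r \<omega>. g (\<tau>+r) \<omega> - f (\<tau>+r) \<omega>) 0 1"
      by (rule sq_int_tri[OF sf jm_shift[OF gm] jm_shift[OF gm] jm_shift[OF fm]])
    also have "sq_int M (\<lambda>r \<omega>. g (\<tau>+r) \<omega> - f (\<tau>+r) \<omega>) 0 1 = sq_int M (\<lambda>r \<omega>. h (\<tau> + r) \<omega>) 0 1"
      by (rule sq_int_cong) (simp add: hdef norm_minus_commute)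
    also have "\<dots> = sq_int M h \<tau> (\<tau>+1)" by (simp add: sq_int_shift[OF sf hm])
    finally have "ennreal (\<epsilon>/4) < sq_int M h \<tau> (\<tau>+1)" using helper1 D by blast
    also have "\<dots> \<le> sq_int M h \<tau> (\<tau>+1/2) + sq_int M h (\<tau>+1/2) (\<tau>+1)" by (rule sq_int_split[OF sf hm])
    finally have "ennreal (\<epsilon>/4/2) \<le> sq_int M h \<tau> (\<tau>+1/2) \<or> ennreal (\<epsilon>/4/2) \<le> sq_int M h (\<tau>+1/2) (\<tau>+1)"
      by (rule helper2)
    then show ?thesis
    proof
      assume 1: "ennreal (\<epsilon>/4/2) \<le> sq_int M h \<tau> (\<tau>+1/2)"
      show ?thesis
      proof (intro exI conjI ballI)
        show "\<bar>\<tau> - 1/2 - a\<bar> \<le> L + 1" using \<tau> by linarith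
        fix t assume "t \<in> {\<tau> - 1/2..\<tau> - 1/2 + 1/2}"
        then have "sq_int M h \<tau> (\<tau>+1/2) \<le> sq_int M h t (t+1)" by (intro sq_int_mono_set) auto
        then show "ennreal c0 \<le> sq_int M h t (t+1)" using 1 unfolding c0_def by simp
      qed
    next
      assume 2: "ennreal (\<epsilon>/4/2) \<le> sq_int M h (\<tau>+1/2) (\<tau>+1)"
      show ?thesis
      proof (intro exI conjI ballI)
        show "\<bar>\<tau> - a\<bar> \<le> L + 1" using \<tau> by linarith
        fix t assume "t \<in> {\<tau>..\<tau> + 1/2}"
        then have "sq_int M h (\<tau>+1/2) (\<tau>+1) \<le> sq_int M h t (t+1)" by (intro sq_int_mono_set) auto
        then show "ennreal c0 \<le> sq_int M h t (t+1)" using 2 unfolding c0_def by simp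
      qed
    qed
  qed
  define P where "P = 2 * (L + 1) + 2"
  have Ppos: "P > 0" unfolding P_def using L0 by simp
  have c0pos: "c0 > 0" unfolding c0_def using \<epsilon>pos by simp
  have good: "\<exists>b. real_of_int k * P \<le> b \<and> b + 1/2 \<le> (real_of_int k + 1) * P \<and>
      (\<forall>t\<in>{b..b+1/2}. ennreal c0 \<le> sq_int M h t (t+1))" for k :: int
  proof -
    obtain b where b: "\<bar>b - (real_of_int k * P + P/2)\<bar> \<le> L + 1"
      and bS: "\<forall>t\<in>{b..b+1/2}. ennreal c0 \<le> sq_int M h t (t+1)"
      using goodb by blast
    have b12: "real_of_int k * P + P/2 - (L+1) \<le> b" "b \<le> real_of_int k * P + P/2 + (L+1)"
      using b by (simp_all add: abs_le_iff)
    have P2: "P/2 = L + 2" unfolding P_def by simp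
    have kP: "(real_of_int k + 1) * P = real_of_int k * P + P" by (simp add: distrib_right)
    have "real_of_int k * P \<le> b" using b12 P2 by linarith
    moreover have "b + 1/2 \<le> (real_of_int k + 1) * P" using b12 P2 kP by linarith
    ultimately show ?thesis using bS by blast
  qed
  have pos: "\<And>t. 0 < \<rho> t" using UT_props(1)[OF assms(3)] by blast
  have Gb: "ennreal (sqrt c0 * \<rho> t) \<le> ennreal (sqrt (enn2real (sq_int M h t (t + 1))) * \<rho> t)"
    if St: "ennreal c0 \<le> sq_int M h t (t+1)" for t
  proof -
    have "enn2real (ennreal c0) \<le> enn2real (sq_int M h t (t + 1))" using enn2real_mono[OF St] hfin[of t] by simp
    then have "c0 \<le> enn2real (sq_int M h t (t + 1))" using c0pos by simp
    then have "sqrt c0 \<le> sqrt (enn2real (sq_int M h t (t + 1)))" by simp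
    then show ?thesis using pos[of t] by (intro ennreal_leI mult_right_mono) auto
  qed
  obtain \<kappa> where \<kappa>pos: "\<kappa> > 0" and W: "\<And>T. P \<le> T \<Longrightarrow> ennreal (\<kappa> * mu (T - P) \<rho>)
      \<le> (\<integral>\<^sup>+ t. ennreal (sqrt (enn2real (sq_int M h t (t + 1))) * \<rho> t) * indicator {-T..T} t \<partial>lborel)"
    using weight_main[OF assms(3) Ppos _ good Gb] c0pos by auto
  have lim0: "((\<lambda>T. (\<integral>\<^sup>+ t. ennreal (sqrt (enn2real (sq_int M h t (t + 1))) * \<rho> t) * indicator {-T..T} t \<partial>lborel)
      / ennreal (mu T \<rho>)) \<longlongrightarrow> 0) at_top"
    using assms(7) unfolding SPAA0_def by simp
  have evpos: "\<forall>\<^sub>F T in at_top. 0 < mu T \<rho>"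
    using UT_props(3)[OF assms(3)] unfolding filterlim_at_top_dense by blast
  define r where "r T = \<kappa> * mu (T - P) \<rho> / mu T \<rho>" for T
  have rnn: "0 \<le> r T" for T unfolding r_def using \<kappa>pos mu_nonneg[OF assms(3)] by simp
  have ev: "\<forall>\<^sub>F T in at_top. ennreal (r T) \<le> (\<integral>\<^sup>+ t. ennreal (sqrt (enn2real (sq_int M h t (t + 1))) * \<rho> t) * indicator {-T..T} t \<partial>lborel)
      / ennreal (mu T \<rho>)"
    using evpos eventually_ge_at_top[of P]
  proof eventually_elim
    case (elim T)
    have "ennreal (r T) = ennreal (\<kappa> * mu (T - P) \<rho>) / ennreal (mu T \<rho>)"
      unfolding r_def using elim \<kappa>pos mu_nonneg[OF assms(3)] by (subst divide_ennreal) auto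
    also have "\<dots> \<le> (\<integral>\<^sup>+ t. ennreal (sqrt (enn2real (sq_int M h t (t + 1))) * \<rho> t) * indicator {-T..T} t \<partial>lborel)
      / ennreal (mu T \<rho>)"
      by (rule divide_right_mono_ennreal[OF W]) (use elim in simp)
    finally show ?case .
  qed
  have "((\<lambda>T. ennreal (r T)) \<longlongrightarrow> 0) at_top"
    by (rule tendsto_sandwich[OF _ ev tendsto_const lim0]) simp
  then have "((\<lambda>T. ennreal (r T)) \<longlongrightarrow> ennreal 0) at_top" by simp
  then have "(r \<longlongrightarrow> 0) at_top" by (subst (asm) tendsto_ennreal_iff) (auto simp: rnn)
  then have "((\<lambda>T. r T / \<kappa>) \<longlongrightarrow> 0 / \<kappa>) at_top" using \<kappa>pos by (intro tendsto_divide tendsto_const) auto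
  moreover have "(\<lambda>T. r T / \<kappa>) = (\<lambda>T. mu (T - P) \<rho> / mu T \<rho>)" using \<kappa>pos by (auto simp: r_def)
  ultimately have "((\<lambda>T. mu (T - P) \<rho> / mu T \<rho>) \<longlongrightarrow> 0) at_top" by simp
  then have "((\<lambda>T. ereal (mu (T - P) \<rho> / mu T \<rho>)) \<longlongrightarrow> ereal 0) at_top" by (rule tendsto_ereal)
  then have "Limsup at_top (\<lambda>T. ereal (mu (T - P) \<rho> / mu T \<rho>)) = 0"
    by (subst lim_imp_Limsup) (auto simp: zero_ereal_def)
  moreover have "Limsup at_top (\<lambda>T. ereal (mu (T - P) \<rho> / mu T \<rho>)) > 0"
    using assms(4) Ppos by auto
  ultimately show False by simp
qed

end
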